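(* There is a constant $C<\infty$, independent of $m\in(0,1)$ and of $K$, such that for all positive integers $K$ and all $m\in(0,1)$, $$\mathbb{E}\big[|\hat\lambda_K(m)-\lambda(m)|^\gamma\big]\le CK^{-\gamma d/2}.$$
   Context: $\alpha=(\alpha_x)_{x\in\mathbb{Z}^d}$ is a stationary random field (expectation $\mathbb{E}$) with $|\alpha_x|\le B<\infty$, satisfying the mixing condition: there exist $\gamma\ge\max\{4,2(d+2)/d^2\}$ and $C<\infty$ such that for all positive integers $l,K$ and every function $f$ of $(\alpha_x)_{x\in\Lambda_l}$ with $\mathbb{E}[f]=0$, $\mathbb{E}[|K^{-d}\sum_{x\in\Lambda_K}\tau_xf|^\gamma]\le C(l/K)^{\gamma d/2}\mathbb{E}[|f|^\gamma]$, where $\Lambda_n$ is a box of side length $n$ and $(\tau_x\alpha)_y=\alpha_{x+y}$, $\tau_xf(\alpha)=f(\tau_x\alpha)$; $\gamma$ in the claim is this exponent. The annealed chemical potential $\lambda(m)$ is defined by $\mathbb{E}[e^{\alpha_0+\lambda}/(1+e^{\alpha_0+\lambda})]=m$, and the empirical chemical potential $\hat\lambda_K(m)$ on $\Lambda_K$ is defined by $m=K^{-d}\sum_{x\in\Lambda_K}e^{\hat\lambda_K+\alpha_x}/(1+e^{\hat\lambda_K+\alpha_x})$. *)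

theory Defs
  imports "HOL-Probability.Probability"
begin

text \<open>Lattice points of Z^d are vectors int ^ 'd, with d = CARD('d).\<close>

definition box :: "nat \<Rightarrow> (int ^ 'd) set" where
  "box n = {x. \<forall>i. 0 \<le> x $ i \<and> x $ i < int n}"

definition logistic :: "real \<Rightarrow> real" where
  "logistic t = exp t / (1 + exp t)"

definition shift :: "int ^ 'd \<Rightarrow> (int ^ 'd \<Rightarrow> real) \<Rightarrow> (int ^ 'd \<Rightarrow> real)" where
  "shift x a = (\<lambda>y. a (x + y))"

definition annealed_cp :: "'w measure \<Rightarrow> ('w \<Rightarrow> int ^ 'd \<Rightarrow> real) \<Rightarrow> real \<Rightarrow> real" where
  "annealed_cp M \<alpha> m = (THE l. (\<integral>\<omega>. logistic (\<alpha> \<omega> 0 + l) \<partial>M) = m)"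

definition empirical_cp :: "('w \<Rightarrow> int ^ 'd \<Rightarrow> real) \<Rightarrow> nat \<Rightarrow> real \<Rightarrow> 'w \<Rightarrow> real" where
  "empirical_cp \<alpha> K m \<omega> =
     (THE l. m = (1 / real K ^ CARD('d)) * (\<Sum>x\<in>(box K :: (int ^ 'd) set). logistic (l + \<alpha> \<omega> x)))"

end

theory Submission
  imports Defs
begin

definition dl :: "real \<Rightarrow> real" where "dl s = exp s / (1 + exp s)^2"

lemma onep[simp]: "0 < 1 + exp (s::real)" "1 + exp (s::real) \<noteq> 0"
  using exp_gt_zero[of s] by linarith+

lemma logistic_deriv: "(logistic has_real_derivative dl s) (at s)"
  unfolding logistic_def dl_def
  by (rule derivative_eq_intros refl | simp)+ (simp add: power2_eq_square field_simps)

lemma dl_eq: "dl s = logistic s * (1 - logistic s)"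
proof -
  have "1 + exp s \<noteq> 0" by (simp add: add_pos_nonneg)
  then show ?thesis unfolding dl_def logistic_def by (simp add: power2_eq_square field_simps)
qed

lemma logistic_bounds: "0 < logistic s" "logistic s < 1"
  unfolding logistic_def by (auto simp: add_pos_nonneg)

lemma logistic_mono_strict: "a < b \<Longrightarrow> logistic a < logistic b"
proof -
  assume "a < b"
  then have "exp a < exp b" by simp
  then show ?thesis unfolding logistic_def by (simp add: divide_simps add_pos_nonneg algebra_simps)
qed

lemma logistic_mono: "a \<le> b \<Longrightarrow> logistic a \<le> logistic b"
  using logistic_mono_strict by (cases "a = b") (auto simp: less_imp_le order_le_less)

lemma logistic_logit: "0 < m \<Longrightarrow> m < 1 \<Longrightarrow> logistic (ln (m / (1 - m))) = m"
  unfolding logistic_def by (simp add: field_simps)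

lemma dl_ratio: "exp (- \<bar>s - t\<bar>) * dl t \<le> dl s"
proof (cases "t \<le> s")
  case True
  have p: "0 < 1 + exp t" "0 < 1 + exp s" by (auto simp: add_pos_nonneg)
  have "exp s * (1 + exp t) \<ge> exp t * (1 + exp s)" using True by (simp add: algebra_simps)
  then have h: "(exp t * (1 + exp s))^2 \<le> (exp s * (1 + exp t))^2"
    by (intro power_mono) auto
  have "exp (- \<bar>s - t\<bar>) * dl t = exp t * exp t / (exp s * (1 + exp t)^2)"
    using True unfolding dl_def by (simp add: exp_diff exp_minus field_simps)
  also have "\<dots> \<le> exp s / (1 + exp s)^2"
  proof -
    have e: "(exp t * (1 + exp s))^2 = exp t * exp t * (1 + exp s)^2"
      "(exp s * (1 + exp t))^2 = exp s * (exp s * (1 + exp t)^2)" by (simp_all add: power2_eq_square)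
    have "exp t * exp t * (1 + exp s)^2 \<le> exp s * (exp s * (1 + exp t)^2)" using h unfolding e .
    moreover have "0 < exp s * (1 + exp t)^2" "0 < (1 + exp s)^2" by simp_all
    ultimately show ?thesis by (simp add: divide_le_eq le_divide_eq mult.assoc)
  qed
  finally show ?thesis unfolding dl_def .
next
  case False
  have p: "0 < 1 + exp t" "0 < 1 + exp s" by (auto simp: add_pos_nonneg)
  have "1 + exp s \<le> 1 + exp t" using False by simp
  then have h: "(1 + exp s)^2 \<le> (1 + exp t)^2" by (intro power_mono) (auto simp: add_pos_nonneg less_imp_le)
  have "exp (- \<bar>s - t\<bar>) * dl t = exp s / (1 + exp t)^2"
    using False unfolding dl_def by (simp add: exp_diff exp_minus field_simps)
  also have "\<dots> \<le> exp s / (1 + exp s)^2"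
    using h p by (intro divide_left_mono) auto
  finally show ?thesis unfolding dl_def .
qed

lemma dl_pos: "0 < dl s" unfolding dl_def by (simp add: add_pos_nonneg)

lemma dl_le1: "dl s \<le> 1"
proof -
  have "logistic s * (1 - logistic s) \<le> 1"
    using logistic_bounds[of s] by (simp add: mult_le_one)
  then show ?thesis by (simp add: dl_eq)
qed

lemma logistic_diff_bounds:
  assumes "a \<le> b" "\<bar>a - L\<bar> \<le> R" "\<bar>b - L\<bar> \<le> R"
  shows "(b - a) * exp (- R) * dl L \<le> logistic b - logistic a"
    and "logistic b - logistic a \<le> (b - a) * exp R * dl L"
proof -
  have "(b - a) * exp (- R) * dl L \<le> logistic b - logistic a \<and>
        logistic b - logistic a \<le> (b - a) * exp R * dl L"
  proof (cases "a = b")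
    case True then show ?thesis by simp
  next
    case False
    then have "a < b" using assms by simp
    from MVT2[OF this, of logistic dl] logistic_deriv
    obtain z where z: "a < z" "z < b" "logistic b - logistic a = (b - a) * dl z" by blast
    have zR: "\<bar>z - L\<bar> \<le> R" using z assms by auto
    have l1: "exp (- R) * dl L \<le> dl z"
      using dl_ratio[of z L] zR dl_pos[of L] by (smt (verit) exp_le_cancel_iff mult_right_mono)
    have l2: "dl z \<le> exp R * dl L"
    proof -
      have "exp (- \<bar>L - z\<bar>) * dl z \<le> dl L" by (rule dl_ratio)
      then have "dl z \<le> exp \<bar>L - z\<bar> * dl L" by (simp add: exp_minus field_simps)
      also have "\<dots> \<le> exp R * dl L" using zR dl_pos[of L] by (intro mult_right_mono) auto
      finally show ?thesis .
    qed
    have "0 \<le> b - a" using \<open>a < b\<close> by simp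
    then show ?thesis using z(3) l1 l2
      by (metis mult.assoc mult_left_mono)
  qed
  then show "(b - a) * exp (- R) * dl L \<le> logistic b - logistic a"
    and "logistic b - logistic a \<le> (b - a) * exp R * dl L" by auto
qed

lemma logistic_lip: "\<bar>logistic a - logistic b\<bar> \<le> \<bar>a - b\<bar>"
proof -
  have *: "logistic y - logistic x \<le> y - x" if "x \<le> y" for x y
  proof (cases "x = y")
    case False
    then have "x < y" using that by simp
    from MVT2[OF this, of logistic dl] logistic_deriv
    obtain z where z: "logistic y - logistic x = (y - x) * dl z" by blast
    then show ?thesis using mult_left_le[of "dl z" "y - x"] dl_le1[of z] that by simp
  qed simp
  show ?thesis
  proof (cases "a \<le> b")
    case True then show ?thesis using *[of a b] logistic_mono[of a b] by linarith
  next
    case False then show ?thesis using *[of b a] logistic_mono[of b a] by linarith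
  qed
qed

lemma isCont_logistic: "isCont logistic x"
  unfolding logistic_def by (intro continuous_intros) (simp add: add_pos_nonneg)

lemma isCont_logistic'[continuous_intros]: "isCont f x \<Longrightarrow> isCont (\<lambda>x. logistic (f x)) x"
  by (rule isCont_o2[OF _ isCont_logistic])

lemma avg_le:
  assumes "finite A" "real (card A) = N" "0 < N" "\<And>x. x \<in> A \<Longrightarrow> g x \<le> c"
  shows "(1 / N) * sum g A \<le> c"
proof -
  have "sum g A \<le> sum (\<lambda>_. c) A" using assms by (intro sum_mono) auto
  also have "\<dots> = N * c" using assms by simp
  finally show ?thesis using assms(3) by (simp add: divide_simps mult.commute)
qed

lemma avg_ge:
  assumes "finite A" "real (card A) = N" "0 < N" "\<And>x. x \<in> A \<Longrightarrow> c \<le> g x"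
  shows "c \<le> (1 / N) * sum g A"
proof -
  have "N * c = sum (\<lambda>_. c) A" using assms by simp
  also have "\<dots> \<le> sum g A" using assms by (intro sum_mono) auto
  finally show ?thesis using assms(3) by (simp add: divide_simps mult.commute)
qed

lemma isCont_lip:
  assumes "\<And>x y. \<bar>G x - G y\<bar> \<le> \<bar>x - y\<bar>"
  shows "isCont G (x::real)"
  unfolding isCont_def LIM_eq
proof (intro allI impI)
  fix r :: real assume "0 < r"
  then show "\<exists>s>0. \<forall>y. y \<noteq> x \<and> norm (y - x) < s \<longrightarrow> norm (G y - G x) < r"
  proof (intro exI[of _ r] conjI allI impI)
    fix y :: real assume "y \<noteq> x \<and> norm (y - x) < r"
    moreover have "\<bar>G y - G x\<bar> \<le> \<bar>y - x\<bar>" by (rule assms)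
    ultimately show "norm (G y - G x) < r" by simp
  qed (rule \<open>0 < r\<close>)
qed

lemma solve_eq:
  fixes G :: "real \<Rightarrow> real"
  assumes cont: "\<And>x. isCont G x" and sm: "\<And>x y. x < y \<Longrightarrow> G x < G y"
    and lo: "G (L - B) \<le> m" and hi: "m \<le> G (L + B)" and B: "0 \<le> B"
  shows "G (THE l. G l = m) = m \<and> \<bar>(THE l. G l = m) - L\<bar> \<le> B"
proof -
  obtain x where x: "L - B \<le> x" "x \<le> L + B" "G x = m"
    using IVT[of G "L - B" m "L + B"] lo hi B cont by auto
  have "(THE l. G l = m) = x"
  proof (rule the_equality)
    fix y assume "G y = m"
    then show "y = x" using sm[of x y] sm[of y x] x by (cases "x < y"; cases "y < x") auto
  qed (rule x(3))
  then show ?thesis using x by auto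
qed

lemma card_box: "card (box K :: (int ^ 'd) set) = K ^ CARD('d)"
proof -
  have eq: "(box K :: (int ^ 'd) set) = vec_lambda ` (UNIV \<rightarrow>\<^sub>E {0..<int K} :: ('d \<Rightarrow> int) set)"
  proof
    show "(box K :: (int ^ 'd) set) \<subseteq> vec_lambda ` (UNIV \<rightarrow>\<^sub>E {0..<int K} :: ('d \<Rightarrow> int) set)"
    proof
      fix x :: "int ^ 'd" assume "x \<in> box K"
      then have "vec_nth x \<in> UNIV \<rightarrow>\<^sub>E {0..<int K}" by (auto simp: box_def)
      moreover have "x = vec_lambda (vec_nth x)" by simp
      ultimately show "x \<in> vec_lambda ` (UNIV \<rightarrow>\<^sub>E {0..<int K})" by blast
    qed
  qed (auto simp: box_def)
  have inj: "inj_on (vec_lambda :: ('d \<Rightarrow> int) \<Rightarrow> int ^ 'd) (UNIV \<rightarrow>\<^sub>E {0..<int K})"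
    by (rule inj_onI) (simp add: vec_lambda_inject)
  have "card (box K :: (int ^ 'd) set) = card (UNIV \<rightarrow>\<^sub>E {0..<int K} :: ('d \<Rightarrow> int) set)"
    unfolding eq by (rule card_image[OF inj])
  also have "\<dots> = K ^ CARD('d)" by (simp add: card_funcsetE)
  finally show ?thesis .
qed

theorem lemma10p3:
  fixes M :: "'w measure"
    and \<alpha> :: "'w \<Rightarrow> int ^ 'd \<Rightarrow> real"
    and B \<gamma> C0 :: real
  assumes prob: "prob_space M"
    and meas: "\<And>x. (\<lambda>\<omega>. \<alpha> \<omega> x) \<in> borel_measurable M"
    and bounded: "\<And>\<omega> x. \<omega> \<in> space M \<Longrightarrow> \<bar>\<alpha> \<omega> x\<bar> \<le> B"
    and stationary: "\<And>x. distr M (PiM UNIV (\<lambda>_. borel)) (\<lambda>\<omega>. shift x (\<alpha> \<omega>))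
                         = distr M (PiM UNIV (\<lambda>_. borel)) \<alpha>"
    and gamma: "\<gamma> \<ge> max 4 (2 * (real CARD('d) + 2) / real CARD('d) ^ 2)"
    and mixing: "\<And>(l::nat) (K::nat) (f :: (int ^ 'd \<Rightarrow> real) \<Rightarrow> real).
        0 < l \<Longrightarrow> 0 < K \<Longrightarrow>
        f \<in> borel_measurable (PiM UNIV (\<lambda>_. borel)) \<Longrightarrow>
        (\<And>a b. (\<forall>y\<in>box l. a y = b y) \<Longrightarrow> f a = f b) \<Longrightarrow>
        integrable M (\<lambda>\<omega>. f (\<alpha> \<omega>)) \<Longrightarrow>
        integrable M (\<lambda>\<omega>. \<bar>f (\<alpha> \<omega>)\<bar> powr \<gamma>) \<Longrightarrow>
        (\<integral>\<omega>. f (\<alpha> \<omega>) \<partial>M) = 0 \<Longrightarrow>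
        (\<integral>\<omega>. \<bar>(1 / real K ^ CARD('d)) * (\<Sum>x\<in>box K. f (shift x (\<alpha> \<omega>)))\<bar> powr \<gamma> \<partial>M)
          \<le> C0 * (real l / real K) powr (\<gamma> * real CARD('d) / 2)
              * (\<integral>\<omega>. \<bar>f (\<alpha> \<omega>)\<bar> powr \<gamma> \<partial>M)"
  shows "\<exists>C::real. \<forall>(K::nat) (m::real). 0 < K \<longrightarrow> 0 < m \<longrightarrow> m < 1 \<longrightarrow>
           (\<integral>\<^sup>+\<omega>. ennreal (\<bar>empirical_cp \<alpha> K m \<omega> - annealed_cp M \<alpha> m\<bar> powr \<gamma>) \<partial>M)
             \<le> ennreal (C * real K powr (- \<gamma> * real CARD('d) / 2))"
proof -
  interpret P: prob_space M by (rule prob)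
  note meas[measurable]
  have g0: "0 \<le> \<gamma>" using gamma by simp
  obtain \<omega>0 where "\<omega>0 \<in> space M" using P.not_empty by blast
  then have B0: "0 \<le> B" using bounded[of \<omega>0 0] by simp
  have bnd: "\<alpha> \<omega> x \<le> B" "- B \<le> \<alpha> \<omega> x" if "\<omega> \<in> space M" for \<omega> x
    using bounded[OF that, of x] by auto
  have mlog[measurable]: "(\<lambda>\<omega>. logistic (\<alpha> \<omega> x + l)) \<in> borel_measurable M" for x l
    unfolding logistic_def by measurable
  have mlog'[measurable]: "(\<lambda>\<omega>. logistic (l + \<alpha> \<omega> x)) \<in> borel_measurable M" for x l
    unfolding logistic_def by measurable
  have int: "integrable M (\<lambda>\<omega>. logistic (\<alpha> \<omega> x + l))" for x l
    by (rule P.integrable_const_bound[where B=1]) (auto intro!: AE_I2 simp: abs_le_iff less_imp_le logistic_bounds)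
  have int': "integrable M (\<lambda>\<omega>. logistic (l + \<alpha> \<omega> x))" for x l
    by (rule P.integrable_const_bound[where B=1]) (auto intro!: AE_I2 simp: abs_le_iff less_imp_le logistic_bounds)
  define C where "C = max 0 C0 * (2 * B * exp (4 * B)) powr \<gamma>"
  show ?thesis
  proof (intro exI[of _ C] allI impI)
    fix K :: nat and m :: real
    assume K: "0 < K" and m0: "0 < m" and m1: "m < 1"
    define N where "N = real K ^ CARD('d)"
    have N0: "0 < N" using K by (simp add: N_def)
    have cardN: "real (card (box K :: (int ^ 'd) set)) = N" by (simp add: card_box N_def)
    have "card (box K :: (int ^ 'd) set) > 0" using K by (simp add: card_box)
    then have fin: "finite (box K :: (int ^ 'd) set)" and ne: "(box K :: (int ^ 'd) set) \<noteq> {}"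
      by (auto simp: card_gt_0_iff)
    define L where "L = ln (m / (1 - m))"
    have sL: "logistic L = m" using m0 m1 by (simp add: L_def logistic_logit)
    define D where "D = dl L"
    have D0: "0 < D" by (simp add: D_def dl_pos)
    define F where "F l = (\<integral>\<omega>. logistic (\<alpha> \<omega> 0 + l) \<partial>M)" for l
    define lam where "lam = annealed_cp M \<alpha> m"
    have lam_the: "lam = (THE l. F l = m)" by (simp add: lam_def annealed_cp_def F_def)
    have Flip: "\<bar>F x - F y\<bar> \<le> \<bar>x - y\<bar>" for x y
    proof -
      have "\<bar>F x - F y\<bar> = \<bar>\<integral>\<omega>. logistic (\<alpha> \<omega> 0 + x) - logistic (\<alpha> \<omega> 0 + y) \<partial>M\<bar>"
        by (simp add: F_def int)
      also have "\<dots> \<le> (\<integral>\<omega>. \<bar>logistic (\<alpha> \<omega> 0 + x) - logistic (\<alpha> \<omega> 0 + y)\<bar> \<partial>M)"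
        by (rule integral_abs_bound)
      also have "\<dots> \<le> (\<integral>\<omega>. \<bar>x - y\<bar> \<partial>M)"
        by (intro integral_mono) (auto simp: int intro!: order_trans[OF logistic_lip])
      also have "\<dots> = \<bar>x - y\<bar>" by (simp add: P.prob_space)
      finally show ?thesis .
    qed
    have Fsm: "F x < F y" if "x < y" for x y
      unfolding F_def
      by (rule P.integral_less_AE_space) (auto intro!: AE_I2 logistic_mono_strict simp: int that P.emeasure_space_1)
    have Fconst_le: "F l \<le> c" if "\<And>\<omega>. \<omega> \<in> space M \<Longrightarrow> logistic (\<alpha> \<omega> 0 + l) \<le> c" for l c
    proof -
      have "F l \<le> (\<integral>\<omega>. c \<partial>M)" unfolding F_def using that by (intro integral_mono) (auto simp: int)
      then show ?thesis by (simp add: P.prob_space)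
    qed
    have Fconst_ge: "c \<le> F l" if "\<And>\<omega>. \<omega> \<in> space M \<Longrightarrow> c \<le> logistic (\<alpha> \<omega> 0 + l)" for l c
    proof -
      have "(\<integral>\<omega>. c \<partial>M) \<le> F l" unfolding F_def using that by (intro integral_mono) (auto simp: int)
      then show ?thesis by (simp add: P.prob_space)
    qed
    have "F (L - B) \<le> m"
    proof (rule Fconst_le)
      fix \<omega> assume "\<omega> \<in> space M"
      then have "\<alpha> \<omega> 0 + (L - B) \<le> L" using bnd(1)[of \<omega> 0] by linarith
      then show "logistic (\<alpha> \<omega> 0 + (L - B)) \<le> m" using sL logistic_mono by metis
    qed
    moreover have "m \<le> F (L + B)"
    proof (rule Fconst_ge)
      fix \<omega> assume "\<omega> \<in> space M"
      then have "L \<le> \<alpha> \<omega> 0 + (L + B)" using bnd(2)[of \<omega> 0] by linarith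
      then show "m \<le> logistic (\<alpha> \<omega> 0 + (L + B))" using sL logistic_mono by metis
    qed
    ultimately have lamF: "F lam = m" and lamL: "\<bar>lam - L\<bar> \<le> B"
      using solve_eq[of F L B m] isCont_lip[of F] Flip Fsm B0 unfolding lam_the by auto
    show "(\<integral>\<^sup>+\<omega>. ennreal (\<bar>empirical_cp \<alpha> K m \<omega> - annealed_cp M \<alpha> m\<bar> powr \<gamma>) \<partial>M)
             \<le> ennreal (C * real K powr (- \<gamma> * real CARD('d) / 2))"
    proof -
    define G where "G \<omega> l = (1 / N) * (\<Sum>x\<in>(box K :: (int ^ 'd) set). logistic (l + \<alpha> \<omega> x))" for \<omega> l
    have Gm[measurable]: "(\<lambda>\<omega>. G \<omega> l) \<in> borel_measurable M" for l
      unfolding G_def by measurable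
    have Gdiff: "(b - a) * exp (- (2 * B)) * D \<le> G \<omega> b - G \<omega> a"
      if \<omega>: "\<omega> \<in> space M" and ab: "a \<le> b" "\<bar>a - L\<bar> \<le> B" "\<bar>b - L\<bar> \<le> B" for \<omega> a b
    proof -
      have "G \<omega> b - G \<omega> a = (1 / N) * (\<Sum>x\<in>(box K :: (int ^ 'd) set). logistic (b + \<alpha> \<omega> x) - logistic (a + \<alpha> \<omega> x))"
        by (simp add: G_def sum_subtractf right_diff_distrib)
      moreover have "(b - a) * exp (- (2 * B)) * D \<le> \<dots>"
      proof (rule avg_ge[OF fin cardN N0])
        fix x :: "int ^ 'd" assume "x \<in> box K"
        have "\<bar>\<alpha> \<omega> x\<bar> \<le> B" using bounded \<omega> by blast
        then show "(b - a) * exp (- (2 * B)) * D \<le> logistic (b + \<alpha> \<omega> x) - logistic (a + \<alpha> \<omega> x)"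
          unfolding D_def using ab logistic_diff_bounds(1)[of "a + \<alpha> \<omega> x" "b + \<alpha> \<omega> x" L "2 * B"]
          by auto
      qed
      ultimately show ?thesis by simp
    qed
    have Gsm: "G \<omega> x < G \<omega> y" if "x < y" for \<omega> x y
      unfolding G_def using N0 fin ne that
      by (intro mult_strict_left_mono sum_strict_mono logistic_mono_strict) auto
    have Gcont: "isCont (G \<omega>) x" for \<omega> x
      unfolding G_def by (intro continuous_intros)
    have lamh: "G \<omega> (empirical_cp \<alpha> K m \<omega>) = m \<and> \<bar>empirical_cp \<alpha> K m \<omega> - L\<bar> \<le> B"
      if \<omega>: "\<omega> \<in> space M" for \<omega>
    proof -
      have e: "empirical_cp \<alpha> K m \<omega> = (THE l. m = G \<omega> l)"
        by (simp add: empirical_cp_def G_def N_def)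
      have e2: "(THE l. m = G \<omega> l) = (THE l. G \<omega> l = m)"
        by (simp only: eq_commute[of m])
      have "G \<omega> (L - B) \<le> m"
        unfolding G_def
      proof (rule avg_le[OF fin cardN N0])
        fix x :: "int ^ 'd"
        have "L - B + \<alpha> \<omega> x \<le> L" using bnd(1)[OF \<omega>, of x] by linarith
        then show "logistic (L - B + \<alpha> \<omega> x) \<le> m" using sL logistic_mono by metis
      qed
      moreover have "m \<le> G \<omega> (L + B)"
        unfolding G_def
      proof (rule avg_ge[OF fin cardN N0])
        fix x :: "int ^ 'd"
        have "L \<le> L + B + \<alpha> \<omega> x" using bnd(2)[OF \<omega>, of x] by linarith
        then show "m \<le> logistic (L + B + \<alpha> \<omega> x)" using sL logistic_mono by metis
      qed
      ultimately show ?thesis unfolding e e2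
        using solve_eq[of "G \<omega>" L B m] Gcont Gsm B0 by auto
    qed
    have key: "\<bar>empirical_cp \<alpha> K m \<omega> - lam\<bar> \<le> exp (2 * B) / D * \<bar>G \<omega> lam - m\<bar>"
      if \<omega>: "\<omega> \<in> space M" for \<omega>
    proof -
      define h where "h = empirical_cp \<alpha> K m \<omega>"
      have h: "G \<omega> h = m" "\<bar>h - L\<bar> \<le> B" using lamh[OF \<omega>] by (auto simp: h_def)
      have inv: "y \<le> exp (2 * B) / D * z" if "y * exp (- (2 * B)) * D \<le> z" for y z
      proof -
        have "y = (y * exp (- (2 * B)) * D) * (exp (2 * B) / D)"
          using D0 by (simp add: exp_minus field_simps)
        also have "\<dots> \<le> z * (exp (2 * B) / D)"
          using that D0 by (intro mult_right_mono) auto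
        finally show ?thesis by (simp add: mult.commute)
      qed
      show ?thesis
      proof (cases "h \<le> lam")
        case True
        from Gdiff[OF \<omega> True h(2) lamL] h(1)
        have "(lam - h) * exp (- (2 * B)) * D \<le> G \<omega> lam - m" by simp
        moreover have "0 \<le> (lam - h) * exp (- (2 * B)) * D" using True D0 by simp
        ultimately show ?thesis using True inv[of "lam - h" "G \<omega> lam - m"] unfolding h_def[symmetric] by simp
      next
        case False
        then have F: "lam \<le> h" by simp
        from Gdiff[OF \<omega> F lamL h(2)] h(1)
        have "(h - lam) * exp (- (2 * B)) * D \<le> m - G \<omega> lam" by simp
        moreover have "0 \<le> (h - lam) * exp (- (2 * B)) * D" using F D0 by simp
        ultimately show ?thesis using F inv[of "h - lam" "m - G \<omega> lam"] unfolding h_def[symmetric] by simp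
      qed
    qed
    define f where "f a = logistic (lam + a 0) - m" for a :: "int ^ 'd \<Rightarrow> real"
    define Q0 where "Q0 = 2 * B * exp (2 * B) * D"
    have fm: "f \<in> borel_measurable (PiM UNIV (\<lambda>_. borel))"
      unfolding f_def logistic_def by measurable
    have fbox: "f a = f b" if "\<forall>y\<in>box 1. a y = b y" for a b
    proof -
      have "(0 :: int ^ 'd) \<in> box 1" by (simp add: box_def)
      then show ?thesis using that by (simp add: f_def)
    qed
    have fa: "f (\<alpha> \<omega>) = logistic (\<alpha> \<omega> 0 + lam) - m" for \<omega>
      by (simp add: f_def add.commute)
    have fint: "integrable M (\<lambda>\<omega>. f (\<alpha> \<omega>))" unfolding fa by (simp add: int)
    have fbound: "\<bar>f (\<alpha> \<omega>)\<bar> \<le> Q0" if \<omega>: "\<omega> \<in> space M" for \<omega>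
    proof -
      have lo: "logistic (lam - B) \<le> m" unfolding lamF[symmetric]
      proof (rule Fconst_ge)
        fix \<omega> assume "\<omega> \<in> space M"
        then have "lam - B \<le> \<alpha> \<omega> 0 + lam" using bnd(2)[of \<omega> 0] by linarith
        then show "logistic (lam - B) \<le> logistic (\<alpha> \<omega> 0 + lam)" by (rule logistic_mono)
      qed
      have hi: "m \<le> logistic (lam + B)" unfolding lamF[symmetric]
      proof (rule Fconst_le)
        fix \<omega> assume "\<omega> \<in> space M"
        then have "\<alpha> \<omega> 0 + lam \<le> lam + B" using bnd(1)[of \<omega> 0] by linarith
        then show "logistic (\<alpha> \<omega> 0 + lam) \<le> logistic (lam + B)" by (rule logistic_mono)
      qed
      have a: "\<bar>\<alpha> \<omega> 0\<bar> \<le> B" using bounded \<omega> by blast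
      have "logistic (lam - B) \<le> logistic (\<alpha> \<omega> 0 + lam)" "logistic (\<alpha> \<omega> 0 + lam) \<le> logistic (lam + B)"
        using a by (auto intro!: logistic_mono)
      moreover have "logistic (lam + B) - logistic (lam - B) \<le> ((lam + B) - (lam - B)) * exp (2 * B) * D"
        unfolding D_def using lamL B0 by (intro logistic_diff_bounds(2)) auto
      ultimately show ?thesis using lo hi unfolding fa Q0_def by (simp add: abs_le_iff)
    qed
    have fle1: "\<bar>f (\<alpha> \<omega>)\<bar> \<le> 1" for \<omega>
      unfolding fa using logistic_bounds[of "\<alpha> \<omega> 0 + lam"] m0 m1 by (simp add: abs_le_iff)
    have fpint: "integrable M (\<lambda>\<omega>. \<bar>f (\<alpha> \<omega>)\<bar> powr \<gamma>)"
      by (rule P.integrable_const_bound[where B=1])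
         (use fle1 g0 in \<open>auto intro!: AE_I2 powr_le1 simp: fa\<close>)
    have fint0: "(\<integral>\<omega>. f (\<alpha> \<omega>) \<partial>M) = 0"
      unfolding fa using lamF by (simp add: int F_def P.prob_space)
    have avgf: "(1 / real K ^ CARD('d)) * (\<Sum>x\<in>box K. f (shift x (\<alpha> \<omega>))) = G \<omega> lam - m" for \<omega>
    proof -
      have "(\<Sum>x\<in>(box K :: (int ^ 'd) set). f (shift x (\<alpha> \<omega>)))
          = (\<Sum>x\<in>(box K :: (int ^ 'd) set). logistic (lam + \<alpha> \<omega> x)) - N * m"
        using cardN by (simp add: f_def shift_def sum_subtractf)
      then show ?thesis using N0 by (simp add: G_def N_def[symmetric] field_simps)
    qed
    have mix: "(\<integral>\<omega>. \<bar>G \<omega> lam - m\<bar> powr \<gamma> \<partial>M)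
        \<le> C0 * (real (1::nat) / real K) powr (\<gamma> * real CARD('d) / 2) * (\<integral>\<omega>. \<bar>f (\<alpha> \<omega>)\<bar> powr \<gamma> \<partial>M)"
      using mixing[of 1 K f, OF _ K fm fbox fint fpint fint0] unfolding avgf by simp
    define P where "P = real K powr (- \<gamma> * real CARD('d) / 2)"
    have P0: "0 \<le> P" by (simp add: P_def)
    have Peq: "(real (1::nat) / real K) powr (\<gamma> * real CARD('d) / 2) = P"
      unfolding P_def by (simp add: powr_divide powr_minus_divide)
    define I where "I = (\<integral>\<omega>. \<bar>f (\<alpha> \<omega>)\<bar> powr \<gamma> \<partial>M)"
    have I0: "0 \<le> I" unfolding I_def by simp
    have IQ: "I \<le> Q0 powr \<gamma>"
    proof -
      have "I \<le> (\<integral>\<omega>. Q0 powr \<gamma> \<partial>M)" unfolding I_def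
        using fpint fbound g0 by (intro integral_mono) (auto intro!: powr_mono2)
      then show ?thesis by (simp add: P.prob_space)
    qed
    define E where "E = (exp (2 * B) / D) powr \<gamma>"
    have E0: "0 \<le> E" by (simp add: E_def)
    have hint: "integrable M (\<lambda>\<omega>. \<bar>G \<omega> lam - m\<bar> powr \<gamma>)"
    proof (rule P.integrable_const_bound[where B=1])
      have "\<bar>\<bar>G \<omega> lam - m\<bar> powr \<gamma>\<bar> \<le> 1" for \<omega>
      proof -
        have "0 \<le> G \<omega> lam" unfolding G_def
          by (rule avg_ge[OF fin cardN N0]) (simp add: less_imp_le logistic_bounds)
        moreover have "G \<omega> lam \<le> 1" unfolding G_def
          by (rule avg_le[OF fin cardN N0]) (simp add: less_imp_le logistic_bounds)
        ultimately have "\<bar>G \<omega> lam - m\<bar> \<le> 1" using m0 m1 by (simp add: abs_le_iff)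
        then show ?thesis using g0 by (simp add: powr_le1)
      qed
      then show "AE \<omega> in M. norm (\<bar>G \<omega> lam - m\<bar> powr \<gamma>) \<le> 1" by simp
    qed measurable
    have "(\<integral>\<^sup>+\<omega>. ennreal (\<bar>empirical_cp \<alpha> K m \<omega> - annealed_cp M \<alpha> m\<bar> powr \<gamma>) \<partial>M)
        \<le> (\<integral>\<^sup>+\<omega>. ennreal (E * \<bar>G \<omega> lam - m\<bar> powr \<gamma>) \<partial>M)"
    proof (rule nn_integral_mono)
      fix \<omega> assume \<omega>: "\<omega> \<in> space M"
      have "\<bar>empirical_cp \<alpha> K m \<omega> - annealed_cp M \<alpha> m\<bar> powr \<gamma> \<le> (exp (2 * B) / D * \<bar>G \<omega> lam - m\<bar>) powr \<gamma>"
        using key[OF \<omega>] g0 unfolding lam_def by (intro powr_mono2) auto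
      also have "\<dots> = E * \<bar>G \<omega> lam - m\<bar> powr \<gamma>" unfolding E_def by (rule powr_mult)
      finally show "ennreal (\<bar>empirical_cp \<alpha> K m \<omega> - annealed_cp M \<alpha> m\<bar> powr \<gamma>) \<le> ennreal (E * \<bar>G \<omega> lam - m\<bar> powr \<gamma>)"
        by (rule ennreal_leI)
    qed
    also have "\<dots> = ennreal (\<integral>\<omega>. E * \<bar>G \<omega> lam - m\<bar> powr \<gamma> \<partial>M)"
      by (rule nn_integral_eq_integral) (auto intro!: integrable_mult_right hint simp: E0)
    also have "\<dots> = ennreal (E * (\<integral>\<omega>. \<bar>G \<omega> lam - m\<bar> powr \<gamma> \<partial>M))" by simp
    also have "\<dots> \<le> ennreal (C * real K powr (- \<gamma> * real CARD('d) / 2))"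
    proof (rule ennreal_leI)
      have H: "(\<integral>\<omega>. \<bar>G \<omega> lam - m\<bar> powr \<gamma> \<partial>M) \<le> C0 * P * I" using mix Peq I_def by simp
      have "C0 * I \<le> max 0 C0 * I" using I0 by (intro mult_right_mono) auto
      also have "\<dots> \<le> max 0 C0 * Q0 powr \<gamma>" using IQ by (intro mult_left_mono) auto
      finally have CI: "C0 * I \<le> max 0 C0 * Q0 powr \<gamma>" .
      have "exp (2 * B) / D * Q0 = 2 * B * exp (4 * B)"
        using D0 by (simp add: Q0_def field_simps mult_exp_exp)
      then have EQ: "E * Q0 powr \<gamma> = (2 * B * exp (4 * B)) powr \<gamma>"
        unfolding E_def by (simp add: powr_mult[symmetric])
      have "E * (\<integral>\<omega>. \<bar>G \<omega> lam - m\<bar> powr \<gamma> \<partial>M) \<le> E * (C0 * P * I)"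
        using H E0 by (intro mult_left_mono)
      also have "\<dots> = P * (E * (C0 * I))" by (simp add: mult_ac)
      also have "\<dots> \<le> P * (E * (max 0 C0 * Q0 powr \<gamma>))"
        using CI E0 P0 by (intro mult_left_mono) auto
      also have "\<dots> = C * P" unfolding C_def using EQ by (simp add: mult_ac)
      finally show "E * (\<integral>\<omega>. \<bar>G \<omega> lam - m\<bar> powr \<gamma> \<partial>M) \<le> C * real K powr (- \<gamma> * real CARD('d) / 2)"
        by (simp add: P_def)
    qed
    finally show ?thesis .
    qed
  qed
qed

end
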